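(* Let $\Phi = \{\xi = (\tau_L,\delta_L,\tau_R,\delta_R) \in \mathbb{R}^4 : \tau_L > |\delta_L + 1|,\ \tau_R < -|\delta_R+1|\}$ and $\Phi^{(3)} = \{\xi \in \Phi : \delta_L > 0, \delta_R < 0\}$. Let $\alpha(\xi) = \tau_L\tau_R + (\delta_L-1)(\delta_R-1)$ and $g(\xi) = (\tau_R^2 - 2\delta_R,\ \delta_R^2,\ \tau_L\tau_R - \delta_L - \delta_R,\ \delta_L\delta_R)$. For $\xi \in \Phi$ let $\lambda_L^u>1$ be the eigenvalue of $\begin{bmatrix}\tau_L & 1\\ -\delta_L & 0\end{bmatrix}$ of modulus greater than one, $\lambda_R^u<-1$ the eigenvalue of $\begin{bmatrix}\tau_R & 1\\ -\delta_R & 0\end{bmatrix}$ of modulus greater than one, and $$\phi^+(\xi) = \delta_R - \big(\tau_R + \delta_L + \delta_R - (1+\tau_R)\lambda_L^u\big)\lambda_L^u,\qquad \phi^-(\xi) = \delta_R - \big(\delta_R + \tau_R - (1+\lambda_R^u)\lambda_L^u\big)\lambda_L^u,$$ $\phi_{\min}(\xi) = \min[\phi^+(\xi),\phi^-(\xi)]$. For $n \ge 0$ define $$\mathcal{R}^{(3)}_n = \{\xi \in \Phi^{(3)} : \phi_{\min}(g^n(\xi)) > 0,\ \phi_{\min}(g^{n+1}(\xi)) \le 0,\ \alpha(\xi) < 0\}.$$ If $\xi \in \mathcal{R}^{(3)}_n$ with $n \ge 1$, then $g(\xi) \in \mathcal{R}^{(3)}_{n-1}$.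
   Context: $g^n$ denotes the $n$-fold composition of $g$; the conditions in the set definitions are understood to include that the relevant iterates $g^k(\xi)$ lie in $\Phi$, so that $\phi_{\min}$ is defined at them. *)

theory Defs
  imports "HOL-Analysis.Analysis"
begin

type_synonym param = "real \<times> real \<times> real \<times> real"  (* (tau_L, delta_L, tau_R, delta_R) *)

definition Phi :: "param set" where
  "Phi = {(tL, dL, tR, dR). tL > \<bar>dL + 1\<bar> \<and> tR < - \<bar>dR + 1\<bar>}"

definition Phi3 :: "param set" where
  "Phi3 = {xi \<in> Phi. case xi of (tL, dL, tR, dR) \<Rightarrow> dL > 0 \<and> dR < 0}"

definition alpha :: "param \<Rightarrow> real" where
  "alpha xi = (case xi of (tL, dL, tR, dR) \<Rightarrow> tL * tR + (dL - 1) * (dR - 1))"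

definition g :: "param \<Rightarrow> param" where
  "g xi = (case xi of (tL, dL, tR, dR) \<Rightarrow>
     (tR^2 - 2 * dR, dR^2, tL * tR - dL - dR, dL * dR))"

definition cmat :: "real \<Rightarrow> real \<Rightarrow> real^2^2" where
  "cmat t d = vector [vector [t, 1], vector [-d, 0]]"

definition lamLu :: "param \<Rightarrow> real" where
  "lamLu xi = (case xi of (tL, dL, tR, dR) \<Rightarrow>
     (THE l. l > 1 \<and> det (cmat tL dL - l *\<^sub>R mat 1) = 0))"

definition lamRu :: "param \<Rightarrow> real" where
  "lamRu xi = (case xi of (tL, dL, tR, dR) \<Rightarrow>
     (THE l. l < -1 \<and> det (cmat tR dR - l *\<^sub>R mat 1) = 0))"

definition phi_plus :: "param \<Rightarrow> real" where
  "phi_plus xi = (case xi of (tL, dL, tR, dR) \<Rightarrow>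
     dR - (tR + dL + dR - (1 + tR) * lamLu xi) * lamLu xi)"

definition phi_minus :: "param \<Rightarrow> real" where
  "phi_minus xi = (case xi of (tL, dL, tR, dR) \<Rightarrow>
     dR - (dR + tR - (1 + lamRu xi) * lamLu xi) * lamLu xi)"

definition phi_min :: "param \<Rightarrow> real" where
  "phi_min xi = min (phi_plus xi) (phi_minus xi)"

definition R3 :: "nat \<Rightarrow> param set" where
  "R3 n = {xi \<in> Phi3.
      (g ^^ n) xi \<in> Phi \<and> phi_min ((g ^^ n) xi) > 0 \<and>
      (g ^^ (n + 1)) xi \<in> Phi \<and> phi_min ((g ^^ (n + 1)) xi) \<le> 0 \<and>
      alpha xi < 0}"

end

theory Submission
  imports Defs
begin

lemma key: fixes tL dL tR dR :: real
  assumes a1: "tL > \<bar>dL+1\<bar>" and a2: "tR < - \<bar>dR+1\<bar>" and a3: "dL > 0" and a4: "dR < 0"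
   and a5: "tL*tR + (dL-1)*(dR-1) < 0"
  shows "(tR^2 - 2*dR)*(tL*tR - dL - dR) + (dR^2 - 1)*(dL*dR - 1) < 0"
proof -
  define QQ where "QQ = - tL*tR + dL + dR"
  define sR where "sR = - tR"
  have s0: "sR > \<bar>dR+1\<bar>" using a2 sR_def by simp
  have Q1: "QQ > 1 + dL*dR" using a5 unfolding QQ_def by (simp add: algebra_simps)
  have "tL * sR > (dL+1) * sR" using a1 s0 a3 by (intro mult_strict_right_mono) auto
  hence Q2: "QQ > (dL+1)* sR + dL + dR" unfolding QQ_def sR_def by simp
  have eq: "(tR^2 - 2*dR)*(tL*tR - dL - dR) + (dR^2 - 1)*(dL*dR - 1)
     = (dR^2 - 1)*(dL*dR - 1) - (sR^2 - 2*dR)*QQ" unfolding QQ_def sR_def by (simp add: algebra_simps power2_eq_square)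
  show ?thesis
  proof (cases "dR \<le> -1")
    case True
    have "(dR+1)*(dR-1) \<ge> 0" using True by (intro mult_nonpos_nonpos) auto
    hence "dR^2 - 1 \<ge> 0" by (simp add: algebra_simps power2_eq_square)
    moreover have "dL*dR - 1 < 0" using a3 a4 by (smt (verit) mult_pos_neg)
    ultimately have r: "(dR^2 - 1)*(dL*dR - 1) \<le> 0" by (simp add: mult_nonneg_nonpos)
    have "sR \<ge> - dR - 1" using s0 by linarith
    hence "(dL+1)* sR \<ge> (dL+1)*(-dR-1)" using a3 by (intro mult_left_mono) auto
    hence "QQ > -dL*dR - 1" using Q2 by (simp add: algebra_simps)
    with Q1 have Qp: "QQ > 0" by linarith
    have "sR^2 - 2*dR > 0" using a4 by (smt (verit) zero_le_power2)
    hence "(sR^2 - 2*dR)*QQ > 0" using Qp by simp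
    with r eq show ?thesis by linarith
  next
    case False
    have sl: "sR > dR + 1" using s0 False by linarith
    have "sR^2 > (dR+1)^2" using sl False by (intro power_strict_mono) auto
    hence S: "sR^2 - 2*dR > 1 + dR^2" by (simp add: algebra_simps power2_eq_square)
    have "(dL+1)* sR \<ge> (dL+1)*(dR+1)" using sl a3 by (intro mult_left_mono) auto
    hence Q3: "QQ > 1 + dL*dR + 2*(dL + dR)" using Q2 by (simp add: algebra_simps)
    have goal: "(1 + dR^2) * QQ \<ge> (dR^2 - 1)*(dL*dR - 1)"
    proof (cases "dL + dR \<le> 0")
      case True
      have "(1 + dR^2) * QQ \<ge> (1 + dR^2) * (1 + dL*dR)" using Q1 by (intro mult_left_mono) auto
      moreover have "(1 + dR^2) * (1 + dL*dR) - (dR^2 - 1)*(dL*dR - 1) = 2*dR*(dR + dL)"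
        by (simp add: algebra_simps power2_eq_square)
      moreover have "2*dR*(dR + dL) \<ge> 0" using True a4 by (simp add: mult_nonpos_nonpos)
      ultimately show ?thesis by linarith
    next
      case False
      have "(1 + dR^2) * QQ \<ge> (1 + dR^2) * (1 + dL*dR + 2*(dL + dR))" using Q3 by (intro mult_left_mono) auto
      moreover have "(1 + dR^2) * (1 + dL*dR + 2*(dL + dR)) - (dR^2 - 1)*(dL*dR - 1) = 2*(dL+dR)*(1 + dR^2 + dR)"
        by (simp add: algebra_simps power2_eq_square)
      moreover have "1 + dR^2 + dR > 0" proof -
        have "dR^2 \<ge> 0" by simp
        thus ?thesis using \<open>\<not> dR \<le> -1\<close> by linarith
      qed
      moreover have "2*(dL+dR)*(1 + dR^2 + dR) \<ge> 0" using False calculation(3) by simp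
      ultimately show ?thesis by linarith
    qed
    have Qp: "QQ > 0"
    proof (cases "dL + dR \<ge> 0")
      case True
      have "(1+dL)*(1+dR) > 0" using a3 False by simp
      moreover have "1 + dL*dR + 2*(dL + dR) = (1+dL)*(1+dR) + (dL+dR)" by (simp add: algebra_simps)
      ultimately show ?thesis using Q3 True by linarith
    next
      case c: False
      have "dL*dR > 1*dR" using a4 c False by (intro mult_strict_right_mono_neg) auto
      then show ?thesis using Q1 False by linarith
    qed
    have "(sR^2 - 2*dR)*QQ > (1 + dR^2) * QQ" using S Qp by (simp add: mult_strict_right_mono)
    with goal eq show ?thesis by linarith
  qed
qed

lemma it: "(g ^^ m) (g xi) = (g ^^ Suc m) xi"
  by (simp add: funpow_Suc_right del: funpow.simps)

theorem proposition8p1: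
  fixes xi :: param and n :: nat
  assumes "n \<ge> 1" and "xi \<in> R3 n"
  shows "g xi \<in> R3 (n - 1)"
proof -
  obtain tL dL tR dR where x: "xi = (tL, dL, tR, dR)" by (cases xi) auto
  have a1: "tL > \<bar>dL+1\<bar>" and a2: "tR < - \<bar>dR+1\<bar>" and a3: "dL > 0" and a4: "dR < 0"
    and a5: "tL*tR + (dL-1)*(dR-1) < 0"
    using assms(2) unfolding R3_def Phi3_def Phi_def alpha_def x by auto
  have gx: "g xi = (tR^2 - 2 * dR, dR^2, tL * tR - dL - dR, dL * dR)" by (simp add: g_def x)
  have K: "(tR^2 - 2*dR)*(tL*tR - dL - dR) + (dR^2 - 1)*(dL*dR - 1) < 0"
    using key[OF a1 a2 a3 a4 a5] .
  have "tR^2 > (dR+1)^2"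
  proof -
    have "\<bar>dR+1\<bar> < \<bar>tR\<bar>" using a2 by linarith
    hence "\<bar>dR+1\<bar>^2 < \<bar>tR\<bar>^2" by (intro power_strict_mono) auto
    thus ?thesis by simp
  qed
  hence p1: "tR^2 - 2*dR > \<bar>dR^2 + 1\<bar>" by (simp add: power2_eq_square algebra_simps)
  have "tL*(-tR) > (dL+1)*(-tR)" using a1 a2 by (intro mult_strict_right_mono) auto
  moreover have "(dL+1)*(-tR) \<ge> (dL+1)*(-(dR+1))" using a2 a3 by (intro mult_left_mono) auto
  ultimately have "tL*tR - dL - dR < - (dL*dR + 1) \<and> tL*tR - dL - dR < dL*dR + 1"
    using a5 by (simp add: algebra_simps)
  hence p2: "tL*tR - dL - dR < - \<bar>dL*dR + 1\<bar>" by linarith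
  have d1: "dR^2 > 0" using a4 by simp
  have d2: "dL*dR < 0" using a3 a4 by (simp add: mult_pos_neg)
  have ph3: "g xi \<in> Phi3" unfolding gx Phi3_def Phi_def using p1 p2 d1 d2 by auto
  have al: "alpha (g xi) < 0" unfolding gx alpha_def using K by simp
  obtain m where m: "n = Suc m" using assms(1) by (cases n) auto
  show ?thesis using assms(2) ph3 al unfolding R3_def m
    by (simp add: it del: funpow.simps)
qed

end
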